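(* Let $H$ be a finite-dimensional real or complex Hilbert space with inner product $(\cdot,\cdot)$ and norm $\|u\|=(u,u)^{1/2}$, and let $A:H\to H$ be a self-adjoint operator with eigenvalues $0<\lambda_1\le\lambda_2\le\dots\le\lambda_K$, so that $A\ge\delta I$ with $\delta=\lambda_1>0$. Let $f:[\lambda_1,\lambda_K]\to(0,\infty)$, and for $\varphi\in H$ let $u=f(A)^{-1}\varphi$ be the solution of $f(A)u=\varphi$. Let $m\ge1$ and let $a_0$ and $a_i,b_i,c_i,d_i$, $i=1,\dots,m$, be real numbers with $a_i-\delta b_i\ge0$, $c_i-\delta d_i>0$, and such that the operators $c_iI+d_iA$ are positive definite, $i=1,\dots,m$. Let $$s(\lambda)=a_0+\sum_{i=1}^m\frac{a_i+b_i\lambda}{c_i+d_i\lambda},$$ and assume that for some $\varepsilon_1\ge0$ $$|s(\lambda)-\log f(\lambda)|\le\varepsilon_1\quad\text{for all }\lambda\in[\lambda_1,\lambda_K].$$ Define piecewise constant coefficients $(a(t),b(t),c(t),d(t))=(a_i,b_i,c_i,d_i)$ for $i-1<t\le i$, $i=1,\dots,m$, and let $w:[0,m]\to H$ be the (continuous) solution of $$\big(c(t)I+d(t)A\big)\frac{dw}{dt}+\big(a(t)I+b(t)A\big)w=0,\quad 0<t\le m,\qquad w(0)=e^{-a_0}\varphi.$$ Let $\tilde w(m)\in H$ satisfy $\|\tilde w(m)-w(m)\|\le\varepsilon_0\|\varphi\|$ for some $\varepsilon_0\ge0$, and set $\hat u=\tilde w(m)$. Then $$\|\hat u-u\|\l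e\varepsilon_0\|\varphi\|+\big(e^{\varepsilon_1}-1\big)\|\varphi\|_{f^{-2}(A)}.$$
   Context: Operator functions are defined spectrally: if $\psi_k$ ($\|\psi_k\|=1$) are orthonormal eigenvectors of $A$ with $A\psi_k=\lambda_k\psi_k$, then $g(A)v=\sum_{k=1}^K g(\lambda_k)(v,\psi_k)\psi_k$. For a self-adjoint positive definite operator $D$ on $H$, $\|v\|_D=(Dv,v)^{1/2}$; here $f^{-2}(A)=\sum_k f(\lambda_k)^{-2}(\cdot,\psi_k)\psi_k$, so $\|\varphi\|_{f^{-2}(A)}=\|f(A)^{-1}\varphi\|$. *)

theory Defs
  imports "HOL-Analysis.Analysis"
begin

text \<open>The finite-dimensional (complex) Hilbert space H is modelled as complex^'n
  with the standard Hermitian inner product; the library norm on complex^'n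
  coincides with the induced norm sqrt((u,u)).\<close>

definition cinner :: "complex^'n \<Rightarrow> complex^'n \<Rightarrow> complex" where
  "cinner u v = (\<Sum>i\<in>UNIV. u $ i * cnj (v $ i))"

text \<open>Operator function defined spectrally from an orthonormal eigensystem
  (psi k, lam k), k < K:  g(A) v = sum_k g(lam k) (v, psi k) psi k.\<close>

definition opfun :: "(real \<Rightarrow> real) \<Rightarrow> nat \<Rightarrow> (nat \<Rightarrow> real) \<Rightarrow> (nat \<Rightarrow> complex^'n)
    \<Rightarrow> complex^'n \<Rightarrow> complex^'n" where
  "opfun g K lam psi v = (\<Sum>k<K. (complex_of_real (g (lam k)) * cinner v (psi k)) *s psi k)"

definition Dnorm :: "(complex^'n \<Rightarrow> complex^'n) \<Rightarrow> complex^'n \<Rightarrow> real" where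
  "Dnorm D v = sqrt (Re (cinner (D v) v))"

end

theory Submission
  imports Defs
begin

lemma cinner_zero_left[simp]: "cinner 0 z = 0"
  by (simp add: cinner_def)
lemma cinner_zero_right[simp]: "cinner z 0 = 0"
  by (simp add: cinner_def)

lemma cinner_add_left: "cinner (x + y) z = cinner x z + cinner y z"
  by (simp add: cinner_def sum.distrib algebra_simps)
lemma cinner_diff_left: "cinner (x - y) z = cinner x z - cinner y z"
  by (simp add: cinner_def sum_subtractf algebra_simps)
lemma cinner_scale_left: "cinner (c *s x) z = c * cinner x z"
  by (simp add: cinner_def sum_distrib_left algebra_simps)
lemma cinner_sum_left: "cinner (\<Sum>k\<in>S. f k) z = (\<Sum>k\<in>S. cinner (f k) z)"
  by (induction S rule: infinite_finite_induct) (auto simp: cinner_add_left)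
lemma cinner_commute: "cinner y x = cnj (cinner x y)"
  by (simp add: cinner_def mult.commute)
lemma cinner_add_right: "cinner z (x + y) = cinner z x + cinner z y"
  by (simp add: cinner_def sum.distrib algebra_simps)
lemma cinner_scale_right: "cinner z (c *s x) = cnj c * cinner z x"
  by (simp add: cinner_def sum_distrib_left algebra_simps)
lemma cinner_sum_right: "cinner z (\<Sum>k\<in>S. f k) = (\<Sum>k\<in>S. cinner z (f k))"
  by (induction S rule: infinite_finite_induct) (auto simp: cinner_add_right)
lemma cinner_self: "cinner x x = complex_of_real (norm x ^ 2)"
proof -
  have "norm x ^ 2 = (\<Sum>i\<in>UNIV. norm (x $ i) ^ 2)"
    by (simp add: norm_vec_def L2_set_def sum_nonneg)
  moreover have "(\<Sum>i\<in>UNIV. x $ i * cnj (x $ i)) = (\<Sum>i\<in>UNIV. complex_of_real (norm (x $ i) ^ 2))"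
    by (rule sum.cong) (simp_all add: complex_norm_square[symmetric])
  ultimately show ?thesis
    by (simp add: cinner_def)
qed
lemma cinner_self_eq0: "cinner x x = 0 \<longleftrightarrow> x = 0"
  by (simp add: cinner_self)

lemma orth_indep:
  fixes S :: "(complex^'n) set"
  assumes "finite S" "\<And>x y. x \<in> S \<Longrightarrow> y \<in> S \<Longrightarrow> x \<noteq> y \<Longrightarrow> cinner x y = 0"
    and "0 \<notin> S"
  shows "vec.independent S"
  unfolding vec.independent_explicit
proof (intro conjI assms allI impI ballI)
  fix c y assume s: "(\<Sum>v\<in>S. c v *s v) = 0" and y: "y \<in> S"
  have "0 = cinner (\<Sum>v\<in>S. c v *s v) y" using s by simp
  also have "\<dots> = (\<Sum>v\<in>S. c v * cinner v y)" by (simp add: cinner_sum_left cinner_scale_left)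
  also have "\<dots> = c y * cinner y y"
    by (subst sum.remove[OF assms(1) y]) (auto intro!: sum.neutral simp: assms(2) y)
  finally show "c y = 0" using y assms(3) cinner_self_eq0[of y] by auto
qed

lemma complete:
  fixes psi :: "nat \<Rightarrow> complex^'n"
  assumes K: "K = CARD('n)"
    and orth: "\<And>j k. j < K \<Longrightarrow> k < K \<Longrightarrow> cinner (psi j) (psi k) = (if j = k then 1 else 0)"
    and v: "\<And>k. k < K \<Longrightarrow> cinner v (psi k) = 0"
  shows "v = 0"
proof (rule ccontr)
  assume v0: "v \<noteq> 0"
  define S where "S = insert v (psi ` {..<K})"
  have inj: "inj_on psi {..<K}"
    by (rule inj_onI) (metis orth lessThan_iff one_neq_zero)
  have vn: "v \<notin> psi ` {..<K}"
    using v orth by fastforce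
  have cS: "card S = K + 1" using inj vn by (simp add: S_def card_image)
  have ind: "vec.independent S"
  proof (rule orth_indep)
    show "finite S" by (simp add: S_def)
    show "0 \<notin> S" using v0 orth by (auto simp: S_def) (metis zero_neq_one cinner_zero_left)
    fix x y assume "x \<in> S" "y \<in> S" "x \<noteq> y"
    then show "cinner x y = 0"
      unfolding S_def using v orth
      by (auto simp: cinner_commute[of v]) 
  qed
  have "card S \<le> vec.dim S" using vec.independent_card_le_dim[OF order_refl ind] .
  also have "\<dots> \<le> CARD('n)" by (rule dim_subset_UNIV_cart_gen)
  finally show False using cS K by simp
qed


lemma coeff:
  fixes K :: nat
  assumes orth: "\<And>j k. j < K \<Longrightarrow> k < K \<Longrightarrow> cinner (psi j) (psi k) = (if j = k then 1 else 0)"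
    and k: "k < K"
  shows "cinner (\<Sum>j<K. \<alpha> j *s psi j) (psi k) = \<alpha> k"
proof -
  have "cinner (\<Sum>j<K. \<alpha> j *s psi j) (psi k) = (\<Sum>j<K. \<alpha> j * (if j = k then 1 else 0))"
    by (simp add: cinner_sum_left cinner_scale_left orth k)
  also have "\<dots> = \<alpha> k" using k by (simp add: if_distrib cong: if_cong) 
  finally show ?thesis .
qed

lemma expand:
  fixes psi :: "nat \<Rightarrow> complex^'n"
  assumes K: "K = CARD('n)"
    and orth: "\<And>j k. j < K \<Longrightarrow> k < K \<Longrightarrow> cinner (psi j) (psi k) = (if j = k then 1 else 0)"
  shows "v = (\<Sum>k<K. cinner v (psi k) *s psi k)"
proof -
  have "v - (\<Sum>k<K. cinner v (psi k) *s psi k) = 0"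
    by (rule complete[OF K orth]) (simp_all add: cinner_diff_left coeff[OF orth])
  then show ?thesis by simp
qed

lemma parseval:
  fixes K :: nat
  assumes orth: "\<And>j k. j < K \<Longrightarrow> k < K \<Longrightarrow> cinner (psi j) (psi k) = (if j = k then 1 else 0)"
  shows "norm (\<Sum>k<K. \<alpha> k *s psi k) ^ 2 = (\<Sum>k<K. cmod (\<alpha> k) ^ 2)"
proof -
  let ?x = "\<Sum>k<K. \<alpha> k *s psi k"
  have "complex_of_real (norm ?x ^ 2) = cinner ?x ?x" by (simp add: cinner_self)
  also have "\<dots> = (\<Sum>k<K. \<alpha> k * cinner (psi k) ?x)"
    by (simp add: cinner_sum_left cinner_scale_left)
  also have "\<dots> = (\<Sum>k<K. \<alpha> k * cnj (\<alpha> k))"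
    by (rule sum.cong) (simp_all add: cinner_commute[of "psi _"] coeff[OF orth])
  also have "\<dots> = complex_of_real (\<Sum>k<K. cmod (\<alpha> k) ^ 2)"
    by (simp add: complex_norm_square[symmetric])
  finally show ?thesis using of_real_eq_iff by blast
qed

lemma bl_cinner: "bounded_linear (\<lambda>x. cinner x z)"
  unfolding cinner_def
  by (intro bounded_linear_sum bounded_linear_mult_const bounded_linear_vec_nth)

lemma ode_step:
  fixes y :: "real \<Rightarrow> complex" and r l :: real
  assumes cont: "continuous_on {l - 1 .. l} y"
    and der: "\<And>t. t \<in> {l - 1 <.. l} \<Longrightarrow> (y has_vector_derivative (- complex_of_real r * y t)) (at t within {l - 1 .. l})"
  shows "y l = complex_of_real (exp (- r)) * y (l - 1)"
proof -
  define g where "g t = exp (r * (t - (l - 1))) *\<^sub>R y t" for t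
  have "g l = g (l - 1)"
  proof (rule has_derivative_zero_unique_strong_interval[of "{l - 1}"])
    show "continuous_on {l - 1..l} g" unfolding g_def
      by (intro continuous_intros cont)
    fix x assume x: "x \<in> {l - 1..l} - {l - 1}"
    have d1: "((\<lambda>t. exp (r * (t - (l - 1)))) has_field_derivative exp (r * (x - (l - 1))) * r) (at x within {l - 1 .. l})"
      by (auto intro!: derivative_eq_intros)
    have "(g has_vector_derivative (exp (r * (x - (l - 1))) *\<^sub>R (- complex_of_real r * y x) + (exp (r * (x - (l - 1))) * r) *\<^sub>R y x)) (at x within {l - 1 .. l})"
      unfolding g_def by (rule has_vector_derivative_scaleR[OF d1 der]) (use x in auto)
    moreover have "exp (r * (x - (l - 1))) *\<^sub>R (- complex_of_real r * y x) + (exp (r * (x - (l - 1))) * r) *\<^sub>R y x = 0"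
      by (simp add: scaleR_conv_of_real algebra_simps)
    ultimately show "(g has_derivative (\<lambda>h. 0)) (at x within {l - 1..l})"
      by (simp add: has_vector_derivative_def)
  qed auto
  then show ?thesis
    by (simp add: g_def scaleR_conv_of_real exp_minus field_simps)
qed


lemma exp_bound:
  fixes t e :: real
  assumes "\<bar>t\<bar> \<le> e"
  shows "\<bar>exp t - 1\<bar> \<le> exp e - 1"
proof (cases "t \<ge> 0")
  case True
  have "exp t \<le> exp e" using assms by simp
  moreover have "1 \<le> exp t" using True by simp
  ultimately show ?thesis by linarith
next
  case False
  have "exp (- e) \<le> exp t" using assms by simp
  moreover have "1 - e \<le> exp (- e)" using exp_ge_add_one_self[of "- e"] by simp
  moreover have "1 + e \<le> exp e" using exp_ge_add_one_self[of e] by simp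
  moreover have "exp t \<le> 1" using False by simp
  ultimately show ?thesis by linarith
qed

lemma dist_bound:
  fixes F S e :: real
  assumes F: "0 < F" and h: "\<bar>S - ln F\<bar> \<le> e"
  shows "\<bar>exp (- S) - 1 / F\<bar> \<le> (exp e - 1) / F"
proof -
  have "exp (ln F - S) = exp (ln F) * exp (- S)"
    by (simp only: diff_conv_add_uminus exp_add)
  then have e1: "exp (ln F - S) = F * exp (- S)"
    by (simp only: exp_ln[OF F])
  have "\<And>E::real. E - 1 / F = (F * E - 1) / F"
    using F by (simp add: field_simps)
  then have eq: "exp (- S) - 1 / F = (exp (ln F - S) - 1) / F"
    unfolding e1 by blast
  have b: "\<bar>exp (ln F - S) - 1\<bar> \<le> exp e - 1"
    by (rule exp_bound) (use h in linarith)
  have "\<bar>exp (- S) - 1 / F\<bar> = \<bar>exp (ln F - S) - 1\<bar> / F"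
    unfolding eq abs_divide using F by simp
  also have "\<dots> \<le> (exp e - 1) / F"
    by (rule divide_right_mono[OF b]) (use F in simp)
  finally show ?thesis .
qed


lemma gen_solve:
  fixes P Q X Y :: complex
  assumes "P * X + Q * Y = 0" "P \<noteq> 0"
  shows "X = - (Q / P) * Y"
proof -
  have "P * X = - (Q * Y)" using assms(1) by (simp add: eq_neg_iff_add_eq_0)
  then have "X = (- (Q * Y)) / P" using assms(2) by (metis nonzero_mult_div_cancel_left)
  then show ?thesis by simp
qed

lemma y_step:
  fixes A :: "complex^'n^'n" and psi :: "nat \<Rightarrow> complex^'n" and w :: "real \<Rightarrow> complex^'n"
  assumes selfadj: "\<And>x y. cinner (A *v x) y = cinner x (A *v y)"
    and eig: "A *v p = complex_of_real la *s p"
    and pn: "cinner p p = 1"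
    and posdef: "\<And>v. v \<noteq> 0 \<Longrightarrow>
        Re (cinner (complex_of_real ci *s v + complex_of_real di *s (A *v v)) v) > 0"
    and cont: "continuous_on {real l - 1 .. real l} w"
    and ode: "\<And>t. t \<in> {real l - 1 <.. real l} \<Longrightarrow>
        \<exists>w'. (w has_vector_derivative w') (at t within {real l - 1 .. real l}) \<and>
             complex_of_real ci *s w' + complex_of_real di *s (A *v w')
             + (complex_of_real ai *s w t + complex_of_real bi *s (A *v w t)) = 0"
  shows "cinner (w (real l)) p = complex_of_real (exp (- ((ai + bi * la) / (ci + di * la)))) * cinner (w (real l - 1)) p"
proof -
  have Ap: "\<And>x. cinner (A *v x) p = complex_of_real la * cinner x p"
    by (simp add: selfadj eig cinner_scale_right)
  have p0: "p \<noteq> 0" using pn by auto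
  have "Re (cinner (complex_of_real ci *s p + complex_of_real di *s (A *v p)) p) > 0"
    using posdef[OF p0] .
  then have D: "ci + di * la > 0"
    by (simp add: cinner_add_left cinner_scale_left Ap pn)
  show ?thesis
  proof (rule ode_step)
    show "continuous_on {real l - 1..real l} (\<lambda>t. cinner (w t) p)"
      by (rule bounded_linear.continuous_on[OF bl_cinner cont])
    fix t assume t: "t \<in> {real l - 1<..real l}"
    obtain w' where w'd: "(w has_vector_derivative w') (at t within {real l - 1 .. real l})"
      and eq: "complex_of_real ci *s w' + complex_of_real di *s (A *v w')
             + (complex_of_real ai *s w t + complex_of_real bi *s (A *v w t)) = 0"
      using ode[OF t] by blast
    have yd: "((\<lambda>t. cinner (w t) p) has_vector_derivative cinner w' p) (at t within {real l - 1 .. real l})"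
      by (rule bounded_linear.has_vector_derivative[OF bl_cinner w'd])
    have "cinner (complex_of_real ci *s w' + complex_of_real di *s (A *v w')
             + (complex_of_real ai *s w t + complex_of_real bi *s (A *v w t))) p = 0"
      by (simp only: eq cinner_zero_left)
    then have "complex_of_real (ci + di * la) * cinner w' p + complex_of_real (ai + bi * la) * cinner (w t) p = 0"
      by (simp add: cinner_add_left cinner_scale_left Ap algebra_simps)
    moreover have Dc: "complex_of_real (ci + di * la) \<noteq> 0" using D by (metis of_real_eq_0_iff less_irrefl)
    ultimately have "cinner w' p = - (complex_of_real (ai + bi * la) / complex_of_real (ci + di * la)) * cinner (w t) p"
      using gen_solve by blast
    then show "((\<lambda>t. cinner (w t) p) has_vector_derivative
          - complex_of_real ((ai + bi * la) / (ci + di * la)) * cinner (w t) p) (at t within {real l - 1..real l})"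
      using yd by simp
  qed
qed

theorem theorem3:
  fixes A :: "complex^'n^'n"
    and K :: nat and lam :: "nat \<Rightarrow> real" and psi :: "nat \<Rightarrow> complex^'n"
    and f :: "real \<Rightarrow> real" and \<phi> u :: "complex^'n"
    and m :: nat and a0 :: real and a b c d :: "nat \<Rightarrow> real"
    and \<epsilon>0 \<epsilon>1 :: real
    and w :: "real \<Rightarrow> complex^'n" and wt :: "complex^'n"
  assumes K_def: "K = CARD('n)"
    and selfadj: "\<And>x y. cinner (A *v x) y = cinner x (A *v y)"
    and orthonormal: "\<And>j k. j < K \<Longrightarrow> k < K \<Longrightarrow> cinner (psi j) (psi k) = (if j = k then 1 else 0)"
    and eigen: "\<And>k. k < K \<Longrightarrow> A *v psi k = complex_of_real (lam k) *s psi k"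
    and sorted: "\<And>j k. j \<le> k \<Longrightarrow> k < K \<Longrightarrow> lam j \<le> lam k"
    and lam_pos: "0 < lam 0"
    and f_pos: "\<And>x. x \<in> {lam 0 .. lam (K - 1)} \<Longrightarrow> 0 < f x"
    and u_sol: "opfun f K lam psi u = \<phi>"
    and m_ge: "1 \<le> m"
    and coef1: "\<And>i. i \<in> {1..m} \<Longrightarrow> a i - lam 0 * b i \<ge> 0"
    and coef2: "\<And>i. i \<in> {1..m} \<Longrightarrow> c i - lam 0 * d i > 0"
    and posdef: "\<And>i v. i \<in> {1..m} \<Longrightarrow> v \<noteq> 0 \<Longrightarrow>
        Re (cinner (complex_of_real (c i) *s v + complex_of_real (d i) *s (A *v v)) v) > 0"
    and eps1: "0 \<le> \<epsilon>1"
    and approx: "\<And>x. x \<in> {lam 0 .. lam (K - 1)} \<Longrightarrow>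
        \<bar>(a0 + (\<Sum>i=1..m. (a i + b i * x) / (c i + d i * x))) - ln (f x)\<bar> \<le> \<epsilon>1"
    and w_cont: "continuous_on {0 .. real m} w"
    and w_init: "w 0 = complex_of_real (exp (- a0)) *s \<phi>"
    and w_ode: "\<And>i t. i \<in> {1..m} \<Longrightarrow> t \<in> {real i - 1 <.. real i} \<Longrightarrow>
        \<exists>w'. (w has_vector_derivative w') (at t within {real i - 1 .. real i}) \<and>
             complex_of_real (c i) *s w' + complex_of_real (d i) *s (A *v w')
             + (complex_of_real (a i) *s w t + complex_of_real (b i) *s (A *v w t)) = 0"
    and eps0: "0 \<le> \<epsilon>0"
    and wt_close: "norm (wt - w (real m)) \<le> \<epsilon>0 * norm \<phi>"
  shows "norm (wt - u) \<le> \<epsilon>0 * norm \<phi>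
           + (exp \<epsilon>1 - 1) * Dnorm (opfun (\<lambda>x. inverse (f x ^ 2)) K lam psi) \<phi>"
proof -
  define F where "F k = f (lam k)" for k
  define ph where "ph k = cinner \<phi> (psi k)" for k
  define r where "r i x = (a i + b i * x) / (c i + d i * x)" for i x
  define s where "s x = a0 + (\<Sum>i=1..m. r i x)" for x
  define E where "E = exp \<epsilon>1"
  have Kpos: "0 < K" using K_def by simp
  have lam_in: "lam k \<in> {lam 0 .. lam (K - 1)}" if "k < K" for k
    using sorted[of 0 k] sorted[of k "K - 1"] that by auto
  have Fpos: "0 < F k" if "k < K" for k
    using f_pos[OF lam_in[OF that]] by (simp add: F_def)
  have uc: "cinner u (psi k) = ph k / complex_of_real (F k)" if k: "k < K" for k
  proof -
    have "ph k = cinner (opfun f K lam psi u) (psi k)" by (simp add: ph_def u_sol)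
    also have "\<dots> = complex_of_real (F k) * cinner u (psi k)"
      unfolding opfun_def F_def by (rule coeff[OF orthonormal k])
    finally show ?thesis using Fpos[OF k] by simp
  qed
  have pn: "cinner (psi k) (psi k) = 1" if "k < K" for k
    using orthonormal[OF that that] by simp
  have yj: "cinner (w (real j)) (psi k) = complex_of_real (exp (- (\<Sum>i=1..j. r i (lam k)))) * cinner (w 0) (psi k)"
    if k: "k < K" and "j \<le> m" for j k
    using \<open>j \<le> m\<close>
  proof (induction j)
    case 0
    then show ?case by simp
  next
    case (Suc j)
    have i: "Suc j \<in> {1..m}" using Suc.prems by simp
    have step: "cinner (w (real (Suc j))) (psi k) = complex_of_real (exp (- r (Suc j) (lam k))) * cinner (w (real (Suc j) - 1)) (psi k)"
      unfolding r_def
    proof (rule y_step[OF selfadj eigen[OF k] pn[OF k]])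
      show "\<And>v. v \<noteq> 0 \<Longrightarrow> 0 < Re (cinner (complex_of_real (c (Suc j)) *s v + complex_of_real (d (Suc j)) *s (A *v v)) v)"
        using posdef[OF i] by blast
      show "continuous_on {real (Suc j) - 1..real (Suc j)} w"
        by (rule continuous_on_subset[OF w_cont]) (use Suc.prems in auto)
      show "\<And>t. t \<in> {real (Suc j) - 1<..real (Suc j)} \<Longrightarrow>
         \<exists>w'. (w has_vector_derivative w') (at t within {real (Suc j) - 1..real (Suc j)}) \<and>
              complex_of_real (c (Suc j)) *s w' + complex_of_real (d (Suc j)) *s (A *v w') +
              (complex_of_real (a (Suc j)) *s w t + complex_of_real (b (Suc j)) *s (A *v w t)) = 0"
        using w_ode[OF i] by blast
    qed
    have "real (Suc j) - 1 = real j" by simp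
    then have "cinner (w (real (Suc j))) (psi k) = complex_of_real (exp (- r (Suc j) (lam k))) * cinner (w (real j)) (psi k)"
      using step by simp
    also have "\<dots> = complex_of_real (exp (- r (Suc j) (lam k)) * exp (- (\<Sum>i=1..j. r i (lam k)))) * cinner (w 0) (psi k)"
      using Suc by simp
    also have "exp (- r (Suc j) (lam k)) * exp (- (\<Sum>i=1..j. r i (lam k))) = exp (- (\<Sum>i=1..Suc j. r i (lam k)))"
    proof -
      have "(\<Sum>i=1..Suc j. r i (lam k)) = (\<Sum>i=1..j. r i (lam k)) + r (Suc j) (lam k)" by simp
      then show ?thesis by (simp add: exp_add[symmetric])
    qed
    finally show ?case .
  qed
  have wm: "cinner (w (real m)) (psi k) = complex_of_real (exp (- s (lam k))) * ph k" if k: "k < K" for k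
  proof -
    have "cinner (w (real m)) (psi k) = complex_of_real (exp (- (\<Sum>i=1..m. r i (lam k)))) * (complex_of_real (exp (- a0)) * ph k)"
      using yj[OF k order_refl] by (simp add: w_init cinner_scale_left ph_def)
    also have "\<dots> = complex_of_real (exp (- (\<Sum>i=1..m. r i (lam k))) * exp (- a0)) * ph k"
      by simp
    also have "exp (- (\<Sum>i=1..m. r i (lam k))) * exp (- a0) = exp (- s (lam k))"
      by (simp add: s_def exp_add[symmetric])
    finally show ?thesis .
  qed
  define g where "g k = complex_of_real (exp (- s (lam k)) - 1 / F k) * ph k" for k
  have "w (real m) - u = (\<Sum>k<K. cinner (w (real m) - u) (psi k) *s psi k)"
    by (rule expand[OF K_def orthonormal])
  also have "\<dots> = (\<Sum>k<K. g k *s psi k)"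
  proof (rule sum.cong[OF refl])
    fix k assume "k \<in> {..<K}"
    then have k: "k < K" by simp
    have "cinner (w (real m) - u) (psi k) = g k"
      using Fpos[OF k] by (simp add: cinner_diff_left wm[OF k] uc[OF k] g_def algebra_simps divide_inverse)
    then show "cinner (w (real m) - u) (psi k) *s psi k = g k *s psi k" by simp
  qed
  finally have nsq: "norm (w (real m) - u) ^ 2 = (\<Sum>k<K. cmod (g k) ^ 2)"
    using parseval[OF orthonormal] by simp
  define T where "T = (\<Sum>k<K. cmod (ph k) ^ 2 / F k ^ 2)"
  have T0: "0 \<le> T" unfolding T_def by (intro sum_nonneg) simp
  have E1: "0 \<le> E - 1" using eps1 by (simp add: E_def)
  have "(\<Sum>k<K. cmod (g k) ^ 2) \<le> (\<Sum>k<K. (E - 1) ^ 2 * (cmod (ph k) ^ 2 / F k ^ 2))"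
  proof (rule sum_mono)
    fix k assume "k \<in> {..<K}"
    then have k: "k < K" by simp
    have sb: "\<bar>s (lam k) - ln (F k)\<bar> \<le> \<epsilon>1"
      using approx[OF lam_in[OF k]] by (simp add: s_def r_def F_def)
    have db: "\<bar>exp (- s (lam k)) - 1 / F k\<bar> \<le> (E - 1) / F k"
      unfolding E_def by (rule dist_bound[OF Fpos[OF k] sb])
    have "cmod (g k) = \<bar>exp (- s (lam k)) - 1 / F k\<bar> * cmod (ph k)"
      unfolding g_def norm_mult norm_of_real ..
    also have "\<dots> \<le> (E - 1) / F k * cmod (ph k)"
      by (rule mult_right_mono[OF db]) simp
    finally have "cmod (g k) ^ 2 \<le> ((E - 1) / F k * cmod (ph k)) ^ 2"
      by (rule power_mono) simp
    also have "\<dots> = (E - 1) ^ 2 * (cmod (ph k) ^ 2 / F k ^ 2)"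
      by (simp add: power_mult_distrib power_divide)
    finally show "cmod (g k) ^ 2 \<le> (E - 1) ^ 2 * (cmod (ph k) ^ 2 / F k ^ 2)" .
  qed
  also have "\<dots> = (E - 1) ^ 2 * T" by (simp add: T_def sum_distrib_left)
  finally have nsq2: "norm (w (real m) - u) ^ 2 \<le> ((E - 1) * sqrt T) ^ 2"
    using nsq T0 by (simp add: power_mult_distrib)
  have wu: "norm (w (real m) - u) \<le> (E - 1) * sqrt T"
    by (rule power2_le_imp_le[OF nsq2]) (use E1 T0 in simp)
  have "cinner (opfun (\<lambda>x. inverse (f x ^ 2)) K lam psi \<phi>) \<phi>
      = (\<Sum>k<K. complex_of_real (inverse (F k ^ 2)) * ph k * cinner (psi k) \<phi>)"
    unfolding opfun_def by (simp add: cinner_sum_left cinner_scale_left F_def ph_def)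
  also have "\<dots> = (\<Sum>k<K. complex_of_real (cmod (ph k) ^ 2 / F k ^ 2))"
  proof (rule sum.cong[OF refl])
    fix k
    have "cinner (psi k) \<phi> = cnj (ph k)" by (simp add: ph_def cinner_commute[of "psi k"])
    then show "complex_of_real (inverse (F k ^ 2)) * ph k * cinner (psi k) \<phi> = complex_of_real (cmod (ph k) ^ 2 / F k ^ 2)"
      by (simp add: mult.assoc complex_norm_square[symmetric] divide_inverse mult.commute)
  qed
  also have "\<dots> = complex_of_real T" by (simp add: T_def)
  finally have Dn: "Dnorm (opfun (\<lambda>x. inverse (f x ^ 2)) K lam psi) \<phi> = sqrt T"
    by (simp add: Dnorm_def)
  have "norm (wt - u) \<le> norm (wt - w (real m)) + norm (w (real m) - u)"
    using norm_triangle_ineq[of "wt - w (real m)" "w (real m) - u"] by simp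
  also have "\<dots> \<le> \<epsilon>0 * norm \<phi> + (exp \<epsilon>1 - 1) * Dnorm (opfun (\<lambda>x. inverse (f x ^ 2)) K lam psi) \<phi>"
    using wt_close wu Dn E_def by simp
  finally show ?thesis .
qed

end
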